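(* Let $G$ be a topological group. Let $f\in L^0(G)$ and let $U$ be a neighbourhood of the identity in $L^0(G)$. Then there exist a finite subset $E\subseteq G$ and $m\in\mathbb N$ such that for every $n\in\mathbb N$ with $n\ge m$ one has $f\in U\,h_n(E^n)$.
   Context: Let $\lambda$ be Lebesgue measure on $[0,1]$. A map $f\colon [0,1]\to G$ is strongly $\lambda$-measurable if for every $\epsilon>0$ there is a closed $A\subseteq[0,1]$ with $\lambda([0,1]\setminus A)\le\epsilon$ and $f|_A$ continuous. $L^{0}(G)$ is the set of $\lambda$-a.e. equivalence classes of strongly $\lambda$-measurable maps $[0,1]\to G$, with pointwise group operations and the topology of convergence in measure: a neighbourhood basis of the identity consists of the sets $N(U,\epsilon)=\{f : \lambda(\{x: f(x)\notin U\})<\epsilon\}$, $U$ an open identity neighbourhood in $G$, $\epsilon>0$. For $n\ge1$, $h_n\colon G^n\to L^0(G)$ sends $g=(g_1,\dots,g_n)$ to the map which is constantly $g_i$ on $[(i-1)/n,i/n)$ for $i=1,\dots,n$. *)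

theory Defs
  imports "HOL-Analysis.Analysis"
begin

text \<open>Topological groups are written additively via the type class topological_group_add
  (group_add is not assumed commutative). Elements of L0(G) are represented by
  strongly measurable representatives; equality in L0(G) is equality a.e. on [0,1].\<close>

definition strongly_measurable :: "(real \<Rightarrow> 'a::topological_space) \<Rightarrow> bool" where
  "strongly_measurable f \<longleftrightarrow>
     (\<forall>\<epsilon>>0. \<exists>A. closed A \<and> A \<subseteq> {0..1} \<and>
        measure lebesgue ({0..1} - A) \<le> \<epsilon> \<and> continuous_on A f)"

definition L0_nbhd :: "'a::topological_group_add set \<Rightarrow> real \<Rightarrow> (real \<Rightarrow> 'a) set" where
  "L0_nbhd V \<epsilon> = {g. strongly_measurable g \<and> measure lebesgue {x\<in>{0..1}. g x \<notin> V} < \<epsilon>}"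

definition L0_identity_nbhd :: "(real \<Rightarrow> 'a::topological_group_add) set \<Rightarrow> bool" where
  "L0_identity_nbhd U \<longleftrightarrow> U \<subseteq> {g. strongly_measurable g} \<and>
     (\<exists>V \<epsilon>. open V \<and> 0 \<in> V \<and> \<epsilon> > 0 \<and> L0_nbhd V \<epsilon> \<subseteq> U)"

text \<open>h_n: the tuple g = [g_1,...,g_n] (a list of length n) is sent to the step map
  which is constantly g_i on [(i-1)/n, i/n).\<close>
definition step_map :: "nat \<Rightarrow> 'a list \<Rightarrow> real \<Rightarrow> 'a" where
  "step_map n g x = g ! min (nat \<lfloor>x * real n\<rfloor>) (n - 1)"

definition tuples :: "'a set \<Rightarrow> nat \<Rightarrow> 'a list set" where
  "tuples E n = {g. length g = n \<and> set g \<subseteq> E}"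

end

theory Submission
  imports Defs
begin

definition idx :: "nat \<Rightarrow> real \<Rightarrow> nat" where
  "idx n y = min (nat \<lfloor>y * real n\<rfloor>) (n - 1)"

lemma idx_lt: "n \<ge> 1 \<Longrightarrow> idx n y < n"
  unfolding idx_def by auto

lemma idx_bounds:
  assumes "n \<ge> 1" "y \<in> {0..1}"
  shows "real (idx n y) / n \<le> y \<and> y \<le> (real (idx n y) + 1) / n"
proof (cases "nat \<lfloor>y * real n\<rfloor> \<le> n - 1")
  case True
  then have k: "idx n y = nat \<lfloor>y * real n\<rfloor>" unfolding idx_def by simp
  have y0: "y * real n \<ge> 0" using assms by auto
  have "real (nat \<lfloor>y * real n\<rfloor>) \<le> y * n" using y0 by linarith
  moreover have "y * n \<le> real (nat \<lfloor>y * real n\<rfloor>) + 1" using y0 by linarith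
  ultimately show ?thesis using assms k by (simp add: field_simps)
next
  case False
  then have k: "idx n y = n - 1" unfolding idx_def by simp
  have "\<lfloor>y * real n\<rfloor> \<ge> int n" using False by linarith
  then have "y * real n \<ge> n" by linarith
  then have "y \<ge> 1" using assms by (simp add: mult_le_cancel_right2)
  then have "y = 1" using assms by auto
  then show ?thesis using assms k by (simp add: field_simps of_nat_diff)
qed

lemma idx_close:
  assumes "n \<ge> 1" "x \<in> {0..1}" "y \<in> {0..1}" "idx n x = idx n y"
  shows "dist x y \<le> 1 / n"
proof -
  have "real (idx n x) / n \<le> x \<and> x \<le> (real (idx n x) + 1) / n" using idx_bounds assms by blast
  moreover have "real (idx n x) / n \<le> y \<and> y \<le> (real (idx n x) + 1) / n" using idx_bounds assms by metis
  ultimately show ?thesis by (simp add: dist_real_def add_divide_distrib abs_le_iff)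
qed

lemma step_map_idx: "step_map n g x = g ! idx n x"
  unfolding step_map_def idx_def by simp

lemma sm_diff:
  fixes f s :: "real \<Rightarrow> 'a::topological_group_add"
  assumes "strongly_measurable f" "strongly_measurable s"
  shows "strongly_measurable (\<lambda>x. f x - s x)"
  unfolding strongly_measurable_def
proof (intro allI impI)
  fix e :: real assume e: "e > 0"
  obtain A1 where A1: "closed A1" "A1 \<subseteq> {0..1}" "measure lebesgue ({0..1} - A1) \<le> e/2" "continuous_on A1 f"
    using assms(1) e unfolding strongly_measurable_def by (meson half_gt_zero)
  obtain A2 where A2: "closed A2" "A2 \<subseteq> {0..1}" "measure lebesgue ({0..1} - A2) \<le> e/2" "continuous_on A2 s"
    using assms(2) e unfolding strongly_measurable_def by (meson half_gt_zero)
  have "{0..1} - (A1 \<inter> A2) = ({0..1} - A1) \<union> ({0..1} - A2)" by auto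
  moreover have "measure lebesgue (({0..1} - A1) \<union> ({0..1} - A2)) \<le> measure lebesgue ({0..1} - A1) + measure lebesgue ({0..1} - A2)"
    by (rule measure_Un_le) (use A1 A2 in auto)
  ultimately have "measure lebesgue ({0..1} - (A1 \<inter> A2)) \<le> e" using A1(3) A2(3) by simp
  moreover have "continuous_on (A1 \<inter> A2) (\<lambda>x. f x - s x)"
    by (intro continuous_on_diff; rule continuous_on_subset) (use A1 A2 in auto)
  ultimately show "\<exists>A. closed A \<and> A \<subseteq> {0..1} \<and> measure lebesgue ({0..1} - A) \<le> e \<and> continuous_on A (\<lambda>x. f x - s x)"
    using A1 A2 by (intro exI[of _ "A1 \<inter> A2"]) auto
qed

lemma sm_step:
  assumes n: "n \<ge> 1"
  shows "strongly_measurable (step_map n g)"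
  unfolding strongly_measurable_def
proof (intro allI impI)
  fix e :: real assume e: "e > 0"
  define \<eta> where "\<eta> = e / (2 * (n + 1))"
  have \<eta>: "\<eta> > 0" using e by (simp add: \<eta>_def)
  define C where "C k = {real k / n + \<eta> .. (real k + 1) / n - \<eta>}" for k :: nat
  define S where "S = (\<Union>k<n. C k)"
  have Cclosed: "closed S" unfolding S_def C_def by (intro closed_UN) auto
  have Csub: "S \<subseteq> {0..1}"
  proof
    fix y assume "y \<in> S"
    then obtain k where k: "k < n" "y \<in> C k" unfolding S_def by auto
    have "real k / n \<ge> 0" by simp
    moreover have "(real k + 1) / n \<le> 1" using k n by (simp add: field_simps)
    moreover have "real k / n + \<eta> \<le> y" "y \<le> (real k + 1) / n - \<eta>" using k(2) unfolding C_def by auto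
    ultimately show "y \<in> {0..1}" using \<eta> \<open>real k / n \<ge> 0\<close> by (auto simp del: divide_nonneg_nonneg zero_le_divide_iff)
  qed
  have cont: "continuous_on S (step_map n g)"
    unfolding S_def
  proof (rule continuous_on_closed_Union)
    fix k assume k: "k \<in> {..<n}"
    show "closed (C k)" unfolding C_def by simp
    have "\<And>y. y \<in> C k \<Longrightarrow> step_map n g y = g ! k"
    proof -
      fix y assume y: "y \<in> C k"
      have "real k + n * \<eta> \<le> y * n" "y * n \<le> real k + 1 - n * \<eta>"
        using y n unfolding C_def by (auto simp: field_simps)
      moreover have "n * \<eta> > 0" using n \<eta> by simp
      ultimately have "\<lfloor>y * real n\<rfloor> = int k" by (simp add: floor_eq_iff)
      then show "step_map n g y = g ! k" using k unfolding step_map_def by auto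
    qed
    then show "continuous_on (C k) (step_map n g)"
      using continuous_on_cong continuous_on_const by (metis (no_types, lifting))
  qed simp
  have cover: "{0..1} - S \<subseteq> (\<Union>j\<in>{0..n}. {real j / n - \<eta> .. real j / n + \<eta>})"
  proof
    fix y assume y: "y \<in> {0..1} - S"
    show "y \<in> (\<Union>j\<in>{0..n}. {real j / n - \<eta> .. real j / n + \<eta>})"
    proof (cases "y = 1")
      case True then show ?thesis using n \<eta> by (intro UN_I[of n]) auto
    next
      case False
      then have y1: "y < 1" "y \<ge> 0" using y by auto
      define k where "k = nat \<lfloor>y * real n\<rfloor>"
      have "y * n < n" using y1 n by simp
      then have "\<lfloor>y * real n\<rfloor> < int n" by (simp add: floor_less_iff)
      then have kn: "k < n" unfolding k_def using n by linarith
      have y0: "y * real n \<ge> 0" using y1 by simp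
      have kb: "real k \<le> y * n" "y * n < real k + 1" unfolding k_def using y0 by linarith+
      have "y \<notin> C k" using y kn unfolding S_def by auto
      then have "y < real k / n + \<eta> \<or> y > (real k + 1) / n - \<eta>" unfolding C_def by auto
      then show ?thesis
      proof
        assume "y < real k / n + \<eta>"
        moreover have "real k / n \<le> y" using kb n by (simp add: field_simps)
        ultimately show ?thesis using kn \<eta> by (intro UN_I[of k]) auto
      next
        assume "y > (real k + 1) / n - \<eta>"
        moreover have "y \<le> (real k + 1) / n" using kb n by (simp add: field_simps)
        ultimately have "y \<in> {real (Suc k) / n - \<eta> .. real (Suc k) / n + \<eta>}" using \<eta> by (simp add: add.commute)
        then show ?thesis using kn by (intro UN_I[of "Suc k"]) auto
      qed
    qed
  qed
  have "measure lebesgue ({0..1} - S) \<le> measure lebesgue (\<Union>j\<in>{0..n}. {real j / n - \<eta> .. real j / n + \<eta>})"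
    by (rule measure_mono_fmeasurable[OF cover]) (use Cclosed in \<open>auto intro!: fmeasurable.finite_UN\<close>)
  also have "\<dots> \<le> (\<Sum>j\<in>{0..n}. measure lebesgue {real j / n - \<eta> .. real j / n + \<eta>})"
    by (rule measure_UNION_le) auto
  also have "\<dots> = (\<Sum>j\<in>{0..n}. 2 * \<eta>)" using \<eta> by (intro sum.cong) auto
  also have "\<dots> = e" using n by (simp add: \<eta>_def field_simps)
  finally show "\<exists>A. closed A \<and> A \<subseteq> {0..1} \<and> measure lebesgue ({0..1} - A) \<le> e \<and> continuous_on A (step_map n g)"
    using Cclosed Csub cont by blast
qed

theorem lemma4p1:
  fixes f :: "real \<Rightarrow> 'a::topological_group_add"
    and U :: "(real \<Rightarrow> 'a) set"
  assumes "strongly_measurable f"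
    and "L0_identity_nbhd U"
  shows "\<exists>E m. finite E \<and>
           (\<forall>n. n \<ge> m \<and> n \<ge> 1 \<longrightarrow>
              (\<exists>u\<in>U. \<exists>g\<in>tuples E n.
                 AE x in lebesgue_on {0..1}. f x = u x + step_map n g x))"
proof -
  obtain V \<epsilon> where V: "open V" "0 \<in> V" "\<epsilon> > 0" "L0_nbhd V \<epsilon> \<subseteq> U"
    using assms(2) unfolding L0_identity_nbhd_def by blast
  obtain A where A: "closed A" "A \<subseteq> {0..1}" "measure lebesgue ({0..1} - A) \<le> \<epsilon>/2" "continuous_on A f"
    using assms(1) V(3) unfolding strongly_measurable_def by (meson half_gt_zero)
  have "\<forall>a\<in>A. \<exists>Ob. open Ob \<and> a \<in> Ob \<and> (\<forall>y\<in>A. y \<in> Ob \<longrightarrow> f y - f a \<in> V)"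
  proof
    fix a assume a: "a \<in> A"
    have "open ((\<lambda>z. z - f a) -` V)" by (intro open_vimage V(1) continuous_intros)
    moreover have "f a \<in> (\<lambda>z. z - f a) -` V" using V(2) by simp
    ultimately show "\<exists>Ob. open Ob \<and> a \<in> Ob \<and> (\<forall>y\<in>A. y \<in> Ob \<longrightarrow> f y - f a \<in> V)"
      using A(4) a unfolding continuous_on_topological by fastforce
  qed
  then obtain Ob where Ob: "\<And>a. a \<in> A \<Longrightarrow> open (Ob a) \<and> a \<in> Ob a \<and> (\<forall>y\<in>A. y \<in> Ob a \<longrightarrow> f y - f a \<in> V)"
    by metis
  have cA: "compact A" using A(1,2) by (metis bounded_closed_interval bounded_subset compact_eq_bounded_closed)
  obtain F where F: "F \<subseteq> A" "finite F" "A \<subseteq> \<Union>(Ob ` F)"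
    by (rule compactE_image[OF cA, of A Ob]) (use Ob in auto)
  obtain d where d: "d > 0" "\<And>x. x \<in> A \<Longrightarrow> \<exists>G \<in> Ob ` F. ball x d \<subseteq> G"
    by (rule Heine_Borel_lemma[OF cA F(3)]) (use Ob F(1) in auto)
  obtain m :: nat where m: "m > 0" "inverse (real m) < d" using ex_inverse_of_nat_less d(1) by blast
  define E where "E = f ` F \<union> {0}"
  have "\<forall>n. n \<ge> m \<and> n \<ge> 1 \<longrightarrow>
              (\<exists>u\<in>U. \<exists>g\<in>tuples E n.
                 AE x in lebesgue_on {0..1}. f x = u x + step_map n g x)"
  proof (intro allI impI)
    fix n assume n: "n \<ge> m \<and> n \<ge> 1"
    define P where "P k a \<longleftrightarrow> a \<in> F \<and> (\<forall>y\<in>A. idx n y = k \<longrightarrow> y \<in> Ob a)" for k a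
    define c where "c k = (if \<exists>a. P k a then f (SOME a. P k a) else 0)" for k
    define g where "g = map c [0..<n]"
    define u where "u x = f x - step_map n g x" for x
    have cE: "c k \<in> E" for k
    proof (cases "\<exists>a. P k a")
      case True
      then have "P k (SOME a. P k a)" by (rule someI_ex)
      then show ?thesis using True unfolding c_def E_def P_def by auto
    qed (auto simp: c_def E_def)
    have gE: "g \<in> tuples E n" unfolding tuples_def g_def using cE by auto
    have nd: "1 / real n < d"
    proof -
      have "1 / real n \<le> inverse (real m)" using n m by (simp add: field_simps)
      then show ?thesis using m by linarith
    qed
    have key: "u x \<in> V" if x: "x \<in> A" for x
    proof -
      obtain a where a: "a \<in> F" "ball x d \<subseteq> Ob a" using d(2)[OF x] by blast
      have "P (idx n x) a" unfolding P_def
      proof (intro conjI ballI impI)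
        fix y assume y: "y \<in> A" "idx n y = idx n x"
        have "dist x y \<le> 1 / n" using idx_close[of n x y] n x y A(2) by (metis subsetD)
        then have "y \<in> ball x d" using nd by simp
        then show "y \<in> Ob a" using a by auto
      qed (use a in auto)
      then have ex: "\<exists>a. P (idx n x) a" by blast
      define a0 where "a0 = (SOME a. P (idx n x) a)"
      have Pa0: "P (idx n x) a0" unfolding a0_def using ex by (rule someI_ex)
      then have "a0 \<in> A" "x \<in> Ob a0" using F(1) x unfolding P_def by auto
      then have fV: "f x - f a0 \<in> V" using Ob x by blast
      have "step_map n g x = c (idx n x)" unfolding step_map_idx g_def using idx_lt[of n x] n by simp
      also have "\<dots> = f a0" unfolding c_def a0_def using ex by simp
      finally show ?thesis using fV unfolding u_def by simp
    qed
    have smu: "strongly_measurable u" unfolding u_def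
      using sm_diff[OF assms(1) sm_step[of n g]] n by simp
    have sub: "{x\<in>{0..1}. u x \<notin> V} \<subseteq> {0..1} - A" using key by auto
    have "measure lebesgue {x\<in>{0..1}. u x \<notin> V} \<le> measure lebesgue ({0..1} - A)"
    proof (cases "{x\<in>{0..1}. u x \<notin> V} \<in> sets lebesgue")
      case True
      show ?thesis by (rule measure_mono_fmeasurable[OF sub True]) (use A(1) in \<open>auto intro: fmeasurable_Diff\<close>)
    next
      case False
      then show ?thesis by (simp add: measure_notin_sets)
    qed
    then have "measure lebesgue {x\<in>{0..1}. u x \<notin> V} < \<epsilon>" using A(3) V(3) by linarith
    then have "u \<in> U" using V(4) smu unfolding L0_nbhd_def by auto
    moreover have "AE x in lebesgue_on {0..1}. f x = u x + step_map n g x"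
      unfolding u_def by simp
    ultimately show "\<exists>u\<in>U. \<exists>g\<in>tuples E n. AE x in lebesgue_on {0..1}. f x = u x + step_map n g x"
      using gE by blast
  qed
  moreover have "finite E" unfolding E_def using F(2) by simp
  ultimately show ?thesis by blast
qed

end
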